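(* Let $\alpha>0$ and let $\mu$ be a positive Borel measure on $\mathbb{C}$ satisfying condition (M). Then the Toeplitz operator $T_\mu$ is bounded on $F^\infty_\alpha$ if and only if $\tilde{\mu}_1\in L^\infty(\mathbb{C},dA)$.
   Context: $F^\infty_\alpha$ is the space of entire functions $f$ with $\|f\|_{\infty,\alpha}=\sup_{z}|f(z)|e^{-\alpha|z|^2/2}<\infty$. $K_z(w)=e^{\alpha\bar z w}$. $\mu$ satisfies condition (M) if $\int_{\mathbb{C}}|K_z(w)|^2e^{-\alpha|w|^2}\,d\mu(w)<\infty$ for all $z\in\mathbb{C}$. The Toeplitz operator on $F^\infty_\alpha$ is $T_\mu f(z)=\int_{\mathbb{C}}f(w)\overline{K_z(w)}e^{-\alpha|w|^2}\,d\mu(w)$. For $t>0$, $\tilde{\mu}_t(z)=\frac{\alpha}{\pi}\int_{\mathbb{C}}e^{-\alpha t|z-w|^2/2}\,d\mu(w)$; $dA$ is area measure. *)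

theory Defs
  imports "HOL-Analysis.Analysis"
begin

definition fock_kernel :: "real \<Rightarrow> complex \<Rightarrow> complex \<Rightarrow> complex" where
  "fock_kernel \<alpha> z w = exp (complex_of_real \<alpha> * cnj z * w)"

definition fock_inf_norm :: "real \<Rightarrow> (complex \<Rightarrow> complex) \<Rightarrow> real" where
  "fock_inf_norm \<alpha> f = (SUP z. norm (f z) * exp (- \<alpha> * (norm z)\<^sup>2 / 2))"

definition fock_inf :: "real \<Rightarrow> (complex \<Rightarrow> complex) set" where
  "fock_inf \<alpha> = {f. f holomorphic_on UNIV \<and>
      (\<exists>M. \<forall>z. norm (f z) * exp (- \<alpha> * (norm z)\<^sup>2 / 2) \<le> M)}"

definition condition_M :: "real \<Rightarrow> complex measure \<Rightarrow> bool" where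
  "condition_M \<alpha> \<mu> \<longleftrightarrow> (\<forall>z. (\<integral>\<^sup>+ w. ennreal ((norm (fock_kernel \<alpha> z w))\<^sup>2
        * exp (- \<alpha> * (norm w)\<^sup>2)) \<partial>\<mu>) < \<infinity>)"

definition toeplitz_integrand :: "real \<Rightarrow> (complex \<Rightarrow> complex) \<Rightarrow> complex \<Rightarrow> complex \<Rightarrow> complex" where
  "toeplitz_integrand \<alpha> f z w =
     f w * cnj (fock_kernel \<alpha> z w) * complex_of_real (exp (- \<alpha> * (norm w)\<^sup>2))"

definition toeplitz :: "real \<Rightarrow> complex measure \<Rightarrow> (complex \<Rightarrow> complex) \<Rightarrow> complex \<Rightarrow> complex" where
  "toeplitz \<alpha> \<mu> f z = (\<integral> w. toeplitz_integrand \<alpha> f z w \<partial>\<mu>)"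

definition toeplitz_bounded_fock_inf :: "real \<Rightarrow> complex measure \<Rightarrow> bool" where
  "toeplitz_bounded_fock_inf \<alpha> \<mu> \<longleftrightarrow>
     (\<exists>C. \<forall>f \<in> fock_inf \<alpha>.
        (\<forall>z. integrable \<mu> (toeplitz_integrand \<alpha> f z)) \<and>
        toeplitz \<alpha> \<mu> f \<in> fock_inf \<alpha> \<and>
        fock_inf_norm \<alpha> (toeplitz \<alpha> \<mu> f) \<le> C * fock_inf_norm \<alpha> f)"

definition mu_tilde :: "real \<Rightarrow> real \<Rightarrow> complex measure \<Rightarrow> complex \<Rightarrow> ennreal" where
  "mu_tilde \<alpha> t \<mu> z = ennreal (\<alpha> / pi) *
      (\<integral>\<^sup>+ w. ennreal (exp (- \<alpha> * t * (norm (z - w))\<^sup>2 / 2)) \<partial>\<mu>)"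

definition in_Linf_dA :: "(complex \<Rightarrow> ennreal) \<Rightarrow> bool" where
  "in_Linf_dA g \<longleftrightarrow> g \<in> borel_measurable lebesgue \<and>
      (\<exists>C::real. AE z in lebesgue. g z \<le> ennreal C)"

end

theory Submission
  imports Defs "HOL-Probability.Distributions"
begin

lemma ennreal_scale_le:
  assumes "a > 0" "C \<ge> 0"
  shows "ennreal a * I \<le> ennreal C \<longleftrightarrow> I \<le> ennreal (C / a)"
proof (cases I)
  case (real r)
  have "ennreal a * I = ennreal (a * r)" using real assms by (simp add: ennreal_mult)
  moreover have "ennreal (a * r) \<le> ennreal C \<longleftrightarrow> a * r \<le> C" using assms by (simp add: ennreal_le_iff)
  moreover have "ennreal r \<le> ennreal (C / a) \<longleftrightarrow> r \<le> C / a" using assms by (simp add: ennreal_le_iff)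
  moreover have "a * r \<le> C \<longleftrightarrow> r \<le> C / a" using assms by (simp add: pos_le_divide_eq mult.commute)
  ultimately show ?thesis using real by simp
next
  case top
  then show ?thesis using assms by (simp add: ennreal_mult_top top_unique)
qed

lemma meas_mu:
  assumes "sets \<mu> = sets borel"
  shows "borel_measurable \<mu> = borel_measurable (borel :: complex measure)"
  by (rule measurable_cong_sets[OF assms refl])

lemma linf_everywhere:
  fixes \<mu> :: "complex measure"
  assumes a: "\<alpha> > 0" and s: "sets \<mu> = sets borel"
    and L: "in_Linf_dA (mu_tilde \<alpha> 1 \<mu>)"
  shows "\<exists>M\<ge>0. \<forall>z. (\<integral>\<^sup>+ w. ennreal (exp (- \<alpha> * (cmod (z - w))\<^sup>2 / 2)) \<partial>\<mu>) \<le> ennreal M"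
proof -
  define I where "I z = (\<integral>\<^sup>+ w. ennreal (exp (- \<alpha> * (cmod (z - w))\<^sup>2 / 2)) \<partial>\<mu>)" for z
  obtain C0 where C0: "AE z in lebesgue. mu_tilde \<alpha> 1 \<mu> z \<le> ennreal C0"
    using L unfolding in_Linf_dA_def by blast
  define C where "C = max C0 0"
  have C: "AE z in lebesgue. mu_tilde \<alpha> 1 \<mu> z \<le> ennreal C"
  proof -
    have le: "ennreal C0 \<le> ennreal C" unfolding C_def by (rule ennreal_leI) simp
    show ?thesis using C0 by eventually_elim (rule order_trans[OF _ le])
  qed
  have "C \<ge> 0" by (simp add: C_def)
  have ab: "\<alpha> / pi > 0" using a by simp
  have mt: "mu_tilde \<alpha> 1 \<mu> z \<le> ennreal C \<longleftrightarrow> I z \<le> ennreal (C / (\<alpha> / pi))" for z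
    unfolding mu_tilde_def I_def using ennreal_scale_le[OF ab \<open>C \<ge> 0\<close>] by simp
  define D where "D = C / (\<alpha> / pi)"
  have meas: "(\<lambda>w. ennreal (exp (- \<alpha> * (cmod (z - w))\<^sup>2 / 2))) \<in> borel_measurable \<mu>" for z
    unfolding meas_mu[OF s] by measurable
  have closedS: "closed {z. I z \<le> ennreal D}"
  proof (subst closed_sequential_limits, intro allI impI, elim conjE)
    fix x l assume xs: "\<forall>n. x n \<in> {z. I z \<le> ennreal D}" and lim: "x \<longlonglongrightarrow> l"
    have tl: "(\<lambda>n. ennreal (exp (- \<alpha> * (cmod (x n - w))\<^sup>2 / 2))) \<longlonglongrightarrow> ennreal (exp (- \<alpha> * (cmod (l - w))\<^sup>2 / 2))" for w
      by (intro tendsto_ennrealI tendsto_intros lim) auto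
    have "I l = (\<integral>\<^sup>+ w. liminf (\<lambda>n. ennreal (exp (- \<alpha> * (cmod (x n - w))\<^sup>2 / 2))) \<partial>\<mu>)"
    proof -
      have "liminf (\<lambda>n. ennreal (exp (- \<alpha> * (cmod (x n - w))\<^sup>2 / 2))) = ennreal (exp (- \<alpha> * (cmod (l - w))\<^sup>2 / 2))" for w
        by (rule lim_imp_Liminf[OF _ tl]) simp
      then show ?thesis unfolding I_def by simp
    qed
    also have "\<dots> \<le> liminf (\<lambda>n. I (x n))"
      unfolding I_def by (rule nn_integral_liminf) (rule meas)
    also have "\<dots> \<le> limsup (\<lambda>n. I (x n))" by (rule Liminf_le_Limsup) simp
    also have "\<dots> \<le> ennreal D" using xs by (intro Limsup_bounded) auto
    finally show "l \<in> {z. I z \<le> ennreal D}" by simp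
  qed
  have "{z. \<not> I z \<le> ennreal D} = {}"
  proof (rule ccontr)
    assume ne: "{z. \<not> I z \<le> ennreal D} \<noteq> {}"
    have op: "open {z. \<not> I z \<le> ennreal D}"
      using closedS by (simp add: open_closed Collect_neg_eq)
    obtain N where N: "N \<in> null_sets lebesgue" "{z. \<not> (mu_tilde \<alpha> 1 \<mu> z \<le> ennreal C)} \<subseteq> N"
    proof -
      from C obtain N where N1: "{z \<in> space lebesgue. \<not> mu_tilde \<alpha> 1 \<mu> z \<le> ennreal C} \<subseteq> N"
        and N2: "N \<in> sets lebesgue" and N3: "emeasure lebesgue N = 0" by (rule AE_E)
      have "N \<in> null_sets lebesgue" unfolding null_sets_def using N2 N3 by blast
      moreover have "{z. \<not> mu_tilde \<alpha> 1 \<mu> z \<le> ennreal C} \<subseteq> N" using N1 by simp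
      ultimately show ?thesis by (rule that)
    qed
    have "{z. \<not> I z \<le> ennreal D} \<subseteq> N" using N(2) mt D_def by auto
    then have "negligible {z. \<not> I z \<le> ennreal D}"
      using N(1) negligible_iff_null_sets negligible_subset by blast
    then show False using open_not_negligible[OF op ne] by simp
  qed
  then have all: "I z \<le> ennreal D" for z by auto
  have "D \<ge> 0" using \<open>C \<ge> 0\<close> a by (simp add: D_def)
  show ?thesis
  proof (intro exI[of _ D] conjI allI)
    show "0 \<le> D" by fact
    fix z show "(\<integral>\<^sup>+ w. ennreal (exp (- \<alpha> * (cmod (z - w))\<^sup>2 / 2)) \<partial>\<mu>) \<le> ennreal D"
      using all[of z] unfolding I_def .
  qed
qed

lemma exp_rem:
  fixes u :: complex
  shows "norm (exp u - 1 - u) \<le> (norm u)\<^sup>2 * exp (norm u)"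
proof -
  have s1: "(\<lambda>k. u^(k+2) /\<^sub>R fact (k+2)) sums (exp u - (\<Sum>k<2. u^k /\<^sub>R fact k))"
    by (intro sums_split_initial_segment exp_converges)
  have e: "(\<Sum>k<2. u^k /\<^sub>R fact k) = 1 + u" by (simp add: eval_nat_numeral)
  have s2: "(\<lambda>k. (norm u)\<^sup>2 * ((norm u)^k /\<^sub>R fact k)) sums ((norm u)\<^sup>2 * exp (norm u))"
    using exp_converges[of "norm u"] by (rule sums_mult)
  have le: "norm (u^(k+2) /\<^sub>R fact (k+2)) \<le> (norm u)\<^sup>2 * ((norm u)^k /\<^sub>R fact k)" for k
  proof -
    have "fact k \<le> (fact (k+2) :: real)" by (intro fact_mono) auto
    moreover have "(0::real) < fact k" by simp
    ultimately have "(norm u)^(k+2) / fact (k+2) \<le> (norm u)^(k+2) / (fact k :: real)"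
      by (intro divide_left_mono) auto
    moreover have "norm (u^(k+2) /\<^sub>R fact (k+2)) = (norm u)^(k+2) / (fact (k+2) :: real)"
      by (simp add: norm_power norm_mult divide_inverse mult_ac del: fact_Suc)
    moreover have "(norm u)\<^sup>2 * ((norm u)^k /\<^sub>R fact k) = (norm u)^(k+2) / (fact k :: real)"
      by (simp add: power_add power2_eq_square divide_inverse mult_ac)
    ultimately show ?thesis by simp
  qed
  have "norm (exp u - 1 - u) = norm (suminf (\<lambda>k. u^(k+2) /\<^sub>R fact (k+2)))"
    unfolding diff_diff_eq e[symmetric] by (rule arg_cong[where f=norm], rule sums_unique[OF s1])
  also have "\<dots> \<le> suminf (\<lambda>k. (norm u)\<^sup>2 * ((norm u)^k /\<^sub>R fact k))"
    using le s2 by (intro norm_suminf_le) (auto simp: sums_iff)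
  also have "\<dots> = (norm u)\<^sup>2 * exp (norm u)" using s2 by (simp add: sums_iff)
  finally show ?thesis .
qed

lemma cmod_diff_sq:
  "(cmod (z - w))\<^sup>2 = (cmod z)\<^sup>2 + (cmod w)\<^sup>2 - 2 * (Re z * Re w + Im z * Im w)"
  unfolding cmod_power2 by (simp add: power2_eq_square algebra_simps)

lemma norm_kernel:
  "norm (fock_kernel \<alpha> z w) = exp (\<alpha> * (Re z * Re w + Im z * Im w))"
  by (simp add: fock_kernel_def algebra_simps)

lemma norm_integrand:
  "norm (toeplitz_integrand \<alpha> f z w) =
     norm (f w) * exp (\<alpha> * (Re z * Re w + Im z * Im w)) * exp (- \<alpha> * (cmod w)\<^sup>2)"
  by (simp add: toeplitz_integrand_def norm_mult norm_kernel)

lemma integrand_bound: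
  assumes "\<alpha> > 0" and N: "norm (f w) * exp (- \<alpha> * (cmod w)\<^sup>2 / 2) \<le> N"
  shows "norm (toeplitz_integrand \<alpha> f z w) \<le>
          N * exp (\<alpha> * (cmod z)\<^sup>2 / 2) * exp (- \<alpha> * (cmod (z - w))\<^sup>2 / 2)"
proof -
  have fw: "norm (f w) \<le> N * exp (\<alpha> * (cmod w)\<^sup>2 / 2)"
    using N by (simp add: exp_minus field_simps)
  have "norm (toeplitz_integrand \<alpha> f z w)
      \<le> (N * exp (\<alpha> * (cmod w)\<^sup>2 / 2)) * exp (\<alpha> * (Re z * Re w + Im z * Im w)) * exp (- \<alpha> * (cmod w)\<^sup>2)"
    unfolding norm_integrand by (intro mult_right_mono fw) auto
  also have "\<dots> = N * exp (\<alpha> * (cmod w)\<^sup>2 / 2 + \<alpha> * (Re z * Re w + Im z * Im w) + (- \<alpha> * (cmod w)\<^sup>2))"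
    by (simp only: exp_add mult.assoc)
  also have "\<alpha> * (cmod w)\<^sup>2 / 2 + \<alpha> * (Re z * Re w + Im z * Im w) + (- \<alpha> * (cmod w)\<^sup>2)
      = \<alpha> * (cmod z)\<^sup>2 / 2 + (- \<alpha> * (cmod (z - w))\<^sup>2 / 2)"
    unfolding cmod_diff_sq by (simp add: field_simps)
  also have "N * exp \<dots> = N * exp (\<alpha> * (cmod z)\<^sup>2 / 2) * exp (- \<alpha> * (cmod (z - w))\<^sup>2 / 2)"
    by (simp only: exp_add mult.assoc)
  finally show ?thesis .
qed

lemma gauss_shift:
  "exp (- \<alpha> * (cmod (q - v))\<^sup>2 / 2) =
     exp (- \<alpha> * (cmod q)\<^sup>2 / 2) * exp (\<alpha> * (Re q * Re v + Im q * Im v)) * exp (- \<alpha> * (cmod v)\<^sup>2 / 2)"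
proof -
  have "- \<alpha> * (cmod (q - v))\<^sup>2 / 2 = - \<alpha> * (cmod q)\<^sup>2 / 2 + \<alpha> * (Re q * Re v + Im q * Im v) + - \<alpha> * (cmod v)\<^sup>2 / 2"
    unfolding cmod_diff_sq by (simp add: field_simps)
  then show ?thesis by (simp only: exp_add)
qed

lemma exp_le_four:
  assumes "\<beta> \<ge> 0"
  shows "exp (\<beta> * cmod v) \<le> exp (2*\<beta>*Re v) + exp (-(2*\<beta>*Re v)) + exp (2*\<beta>*Im v) + exp (-(2*\<beta>*Im v))"
proof -
  have cm: "cmod v \<le> \<bar>Re v\<bar> + \<bar>Im v\<bar>" by (rule cmod_le)
  have p: "exp x > 0" for x :: real by simp
  show ?thesis
  proof (cases "\<bar>Im v\<bar> \<le> \<bar>Re v\<bar>")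
    case True
    have "\<beta> * cmod v \<le> \<beta> * (\<bar>Re v\<bar> + \<bar>Im v\<bar>)" using cm assms by (rule mult_left_mono)
    also have "\<dots> \<le> \<beta> * (2 * \<bar>Re v\<bar>)" using True assms by (intro mult_left_mono) auto
    finally have "\<beta> * cmod v \<le> 2 * \<beta> * \<bar>Re v\<bar>" by simp
    then have "exp (\<beta> * cmod v) \<le> exp (2 * \<beta> * \<bar>Re v\<bar>)" by simp
    also have "\<dots> \<le> exp (2*\<beta>*Re v) + exp (-(2*\<beta>*Re v))"
      by (cases "Re v \<ge> 0") (auto simp: add_increasing add_increasing2 less_imp_le)
    finally show ?thesis using p[of "2*\<beta>*Im v"] p[of "-(2*\<beta>*Im v)"] by linarith
  next
    case False
    have "\<beta> * cmod v \<le> \<beta> * (\<bar>Re v\<bar> + \<bar>Im v\<bar>)" using cm assms by (rule mult_left_mono)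
    also have "\<dots> \<le> \<beta> * (2 * \<bar>Im v\<bar>)" using False assms by (intro mult_left_mono) auto
    finally have "\<beta> * cmod v \<le> 2 * \<beta> * \<bar>Im v\<bar>" by simp
    then have "exp (\<beta> * cmod v) \<le> exp (2 * \<beta> * \<bar>Im v\<bar>)" by simp
    also have "\<dots> \<le> exp (2*\<beta>*Im v) + exp (-(2*\<beta>*Im v))"
      by (cases "Im v \<ge> 0") (auto simp: add_increasing add_increasing2 less_imp_le)
    finally show ?thesis using p[of "2*\<beta>*Re v"] p[of "-(2*\<beta>*Re v)"] by linarith
  qed
qed

lemma four_points:
  assumes a: "\<alpha> > 0" and b: "\<beta> \<ge> 0"
  defines "R \<equiv> complex_of_real (2 * \<beta> / \<alpha>)"
  shows "exp (\<beta> * cmod v) * exp (- \<alpha> * (cmod v)\<^sup>2 / 2) \<le> exp (2 * \<beta>\<^sup>2 / \<alpha>) *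
     (exp (- \<alpha> * (cmod (R - v))\<^sup>2 / 2) + exp (- \<alpha> * (cmod (- R - v))\<^sup>2 / 2) +
      exp (- \<alpha> * (cmod (\<i> * R - v))\<^sup>2 / 2) + exp (- \<alpha> * (cmod (- (\<i> * R) - v))\<^sup>2 / 2))"
proof -
  define E where "E = exp (- \<alpha> * (cmod v)\<^sup>2 / 2)"
  define K where "K = exp (- \<alpha> * (2 * \<beta> / \<alpha>)\<^sup>2 / 2)"
  have cR: "(cmod R)\<^sup>2 = (2 * \<beta> / \<alpha>)\<^sup>2" "(cmod (- R))\<^sup>2 = (2 * \<beta> / \<alpha>)\<^sup>2"
    "(cmod (\<i> * R))\<^sup>2 = (2 * \<beta> / \<alpha>)\<^sup>2" "(cmod (- (\<i> * R)))\<^sup>2 = (2 * \<beta> / \<alpha>)\<^sup>2"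
    unfolding R_def by (simp_all only: norm_minus_cancel norm_mult norm_of_real norm_ii mult_1_left power2_abs)
  have ab: "\<alpha> * (2 * \<beta> / \<alpha>) = 2 * \<beta>" using a by simp
  have t1: "exp (- \<alpha> * (cmod (R - v))\<^sup>2 / 2) = K * exp (2*\<beta>*Re v) * E"
    unfolding gauss_shift[of \<alpha> R v] cR K_def E_def using a by (simp add: R_def ab mult.assoc[symmetric])
  have t2: "exp (- \<alpha> * (cmod (- R - v))\<^sup>2 / 2) = K * exp (-(2*\<beta>*Re v)) * E"
    unfolding gauss_shift[of \<alpha> "- R" v] cR K_def E_def using a by (simp add: R_def ab mult.assoc[symmetric])
  have t3: "exp (- \<alpha> * (cmod (\<i> * R - v))\<^sup>2 / 2) = K * exp (2*\<beta>*Im v) * E"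
    unfolding gauss_shift[of \<alpha> "\<i> * R" v] cR K_def E_def using a by (simp add: R_def ab mult.assoc[symmetric])
  have t4: "exp (- \<alpha> * (cmod (- (\<i> * R) - v))\<^sup>2 / 2) = K * exp (-(2*\<beta>*Im v)) * E"
    unfolding gauss_shift[of \<alpha> "- (\<i> * R)" v] cR K_def E_def using a by (simp add: R_def ab mult.assoc[symmetric])
  have KK: "exp (2 * \<beta>\<^sup>2 / \<alpha>) * K = 1"
  proof -
    have "2 * \<beta>\<^sup>2 / \<alpha> + - \<alpha> * (2 * \<beta> / \<alpha>)\<^sup>2 / 2 = 0" using a by (simp add: field_simps power2_eq_square)
    then show ?thesis unfolding K_def by (simp flip: exp_add)
  qed
  have "exp (\<beta> * cmod v) * E \<le> (exp (2*\<beta>*Re v) + exp (-(2*\<beta>*Re v)) + exp (2*\<beta>*Im v) + exp (-(2*\<beta>*Im v))) * E"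
    by (intro mult_right_mono exp_le_four b) (simp add: E_def)
  also have "\<dots> = (exp (2 * \<beta>\<^sup>2 / \<alpha>) * K) * (exp (2*\<beta>*Re v) + exp (-(2*\<beta>*Re v)) + exp (2*\<beta>*Im v) + exp (-(2*\<beta>*Im v))) * E"
    by (simp add: KK)
  also have "\<dots> = exp (2 * \<beta>\<^sup>2 / \<alpha>) *
     (exp (- \<alpha> * (cmod (R - v))\<^sup>2 / 2) + exp (- \<alpha> * (cmod (- R - v))\<^sup>2 / 2) +
      exp (- \<alpha> * (cmod (\<i> * R - v))\<^sup>2 / 2) + exp (- \<alpha> * (cmod (- (\<i> * R) - v))\<^sup>2 / 2))"
    unfolding t1 t2 t3 t4 by (simp add: algebra_simps)
  finally show ?thesis unfolding E_def .
qed

lemma deriv_from_bound: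
  fixes F :: "complex \<Rightarrow> complex"
  assumes "\<And>z. cmod (z - z0) \<le> 1 \<Longrightarrow> norm (F z - F z0 - (z - z0) * D) \<le> K * (cmod (z - z0))\<^sup>2"
  shows "(F has_field_derivative D) (at z0)"
proof -
  have ev: "eventually (\<lambda>z. norm ((F z - F z0) / (z - z0) - D) \<le> K * cmod (z - z0)) (at z0)"
    unfolding eventually_at
  proof (intro exI[of _ 1] conjI ballI impI)
    fix z assume z: "z \<noteq> z0 \<and> dist z z0 < 1"
    then have nz: "z - z0 \<noteq> 0" by simp
    have "(F z - F z0) / (z - z0) - D = (F z - F z0 - (z - z0) * D) / (z - z0)"
      using nz by (simp add: field_simps)
    then have "norm ((F z - F z0) / (z - z0) - D) = norm (F z - F z0 - (z - z0) * D) / cmod (z - z0)"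
      by (simp add: norm_divide)
    also have "\<dots> \<le> K * (cmod (z - z0))\<^sup>2 / cmod (z - z0)"
      using z assms[of z] nz by (intro divide_right_mono) (auto simp: dist_norm)
    also have "\<dots> = K * cmod (z - z0)" using nz by (simp add: power2_eq_square)
    finally show "norm ((F z - F z0) / (z - z0) - D) \<le> K * cmod (z - z0)" .
  qed simp
  have "((\<lambda>z. K * cmod (z - z0)) \<longlongrightarrow> K * cmod (z0 - z0)) (at z0)"
    by (intro tendsto_intros)
  then have "((\<lambda>z. K * cmod (z - z0)) \<longlongrightarrow> 0) (at z0)" by simp
  then have "((\<lambda>z. (F z - F z0) / (z - z0) - D) \<longlongrightarrow> 0) (at z0)"
    by (rule Lim_null_comparison[OF ev])
  then have "((\<lambda>z. (F z - F z0) / (z - z0)) \<longlongrightarrow> D) (at z0)"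
    by (simp add: LIM_zero_iff)
  then show ?thesis by (simp add: has_field_derivative_iff)
qed

lemma L1:
  fixes \<mu> :: "complex measure"
  assumes a: "\<alpha> > 0" and b: "\<beta> \<ge> 0" and s: "sets \<mu> = sets borel" and M: "M \<ge> 0"
    and G: "\<And>p. (\<integral>\<^sup>+ w. ennreal (exp (- \<alpha> * (cmod (p - w))\<^sup>2 / 2)) \<partial>\<mu>) \<le> ennreal M"
  shows "(\<integral>\<^sup>+ w. ennreal (exp (\<beta> * cmod (w - z0)) * exp (- \<alpha> * (cmod (z0 - w))\<^sup>2 / 2)) \<partial>\<mu>)
           \<le> ennreal (exp (2 * \<beta>\<^sup>2 / \<alpha>) * (4 * M))"
proof -
  define R where "R = complex_of_real (2 * \<beta> / \<alpha>)"
  define c where "c = exp (2 * \<beta>\<^sup>2 / \<alpha>)"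
  define E where "E p w = exp (- \<alpha> * (cmod (p - w))\<^sup>2 / 2)" for p w
  have mE: "(\<lambda>w. ennreal (E p w)) \<in> borel_measurable \<mu>" for p
    unfolding meas_mu[OF s] E_def by measurable
  have pt: "ennreal (exp (\<beta> * cmod (w - z0)) * exp (- \<alpha> * (cmod (z0 - w))\<^sup>2 / 2))
      \<le> ennreal c * (ennreal (E (R + z0) w) + ennreal (E (- R + z0) w) + ennreal (E (\<i> * R + z0) w) + ennreal (E (- (\<i> * R) + z0) w))" for w
  proof -
    have "exp (\<beta> * cmod (w - z0)) * exp (- \<alpha> * (cmod (z0 - w))\<^sup>2 / 2)
       = exp (\<beta> * cmod (w - z0)) * exp (- \<alpha> * (cmod (w - z0))\<^sup>2 / 2)"
      by (simp add: norm_minus_commute)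
    also have "\<dots> \<le> c * (E (R + z0) w + E (- R + z0) w + E (\<i> * R + z0) w + E (- (\<i> * R) + z0) w)"
      using four_points[OF a b, of "w - z0"] unfolding c_def E_def R_def
      by (simp add: algebra_simps)
    finally have "exp (\<beta> * cmod (w - z0)) * exp (- \<alpha> * (cmod (z0 - w))\<^sup>2 / 2)
      \<le> c * (E (R + z0) w + E (- R + z0) w + E (\<i> * R + z0) w + E (- (\<i> * R) + z0) w)" .
    then show ?thesis
      by (simp add: E_def c_def ennreal_mult[symmetric] ennreal_plus[symmetric] del: ennreal_plus)
  qed
  have "(\<integral>\<^sup>+ w. ennreal (exp (\<beta> * cmod (w - z0)) * exp (- \<alpha> * (cmod (z0 - w))\<^sup>2 / 2)) \<partial>\<mu>)
      \<le> (\<integral>\<^sup>+ w. ennreal c * (ennreal (E (R + z0) w) + ennreal (E (- R + z0) w) + ennreal (E (\<i> * R + z0) w) + ennreal (E (- (\<i> * R) + z0) w)) \<partial>\<mu>)"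
    by (intro nn_integral_mono pt)
  also have "\<dots> = ennreal c * ((\<integral>\<^sup>+ w. ennreal (E (R + z0) w) \<partial>\<mu>) + (\<integral>\<^sup>+ w. ennreal (E (- R + z0) w) \<partial>\<mu>)
      + (\<integral>\<^sup>+ w. ennreal (E (\<i> * R + z0) w) \<partial>\<mu>) + (\<integral>\<^sup>+ w. ennreal (E (- (\<i> * R) + z0) w) \<partial>\<mu>))"
    using mE by (simp add: nn_integral_cmult nn_integral_add)
  also have "\<dots> \<le> ennreal c * (ennreal M + ennreal M + ennreal M + ennreal M)"
    using G unfolding E_def by (intro mult_left_mono add_mono) auto
  also have "\<dots> = ennreal (exp (2 * \<beta>\<^sup>2 / \<alpha>) * (4 * M))"
    using M by (simp add: c_def ennreal_mult[symmetric] ennreal_plus[symmetric] del: ennreal_plus)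
  finally show ?thesis .
qed

lemma tint_meas:
  assumes s: "sets \<mu> = sets borel" and fm: "f \<in> borel_measurable borel"
  shows "toeplitz_integrand \<alpha> f z \<in> borel_measurable \<mu>"
proof -
  have "continuous_on UNIV (\<lambda>w. cnj (fock_kernel \<alpha> z w) * complex_of_real (exp (- \<alpha> * (cmod w)\<^sup>2)))"
    unfolding fock_kernel_def by (intro continuous_intros)
  then have [measurable]: "(\<lambda>w. cnj (fock_kernel \<alpha> z w) * complex_of_real (exp (- \<alpha> * (cmod w)\<^sup>2))) \<in> borel_measurable borel"
    by (rule borel_measurable_continuous_onI)
  have [measurable]: "f \<in> borel_measurable borel" by (fact fm)
  have eq: "toeplitz_integrand \<alpha> f z = (\<lambda>w. f w * (cnj (fock_kernel \<alpha> z w) * complex_of_real (exp (- \<alpha> * (cmod w)\<^sup>2))))"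
    by (simp add: toeplitz_integrand_def fun_eq_iff mult.assoc)
  show ?thesis unfolding meas_mu[OF s] eq by measurable
qed

lemma tint_int:
  fixes \<mu> :: "complex measure"
  assumes a: "\<alpha> > 0" and s: "sets \<mu> = sets borel" and fm: "f \<in> borel_measurable borel"
    and N: "\<And>w. norm (f w) * exp (- \<alpha> * (cmod w)\<^sup>2 / 2) \<le> N"
    and G: "\<And>p. (\<integral>\<^sup>+ w. ennreal (exp (- \<alpha> * (cmod (p - w))\<^sup>2 / 2)) \<partial>\<mu>) \<le> ennreal M" and M: "M \<ge> 0"
  shows "(\<integral>\<^sup>+ w. ennreal (norm (toeplitz_integrand \<alpha> f z w)) \<partial>\<mu>) \<le> ennreal (N * exp (\<alpha> * (cmod z)\<^sup>2 / 2) * M)"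
    and "integrable \<mu> (toeplitz_integrand \<alpha> f z)"
proof -
  have N0: "N \<ge> 0" using N[of 0] by (smt (verit) mult_nonneg_nonneg norm_ge_zero exp_ge_zero)
  have "(\<integral>\<^sup>+ w. ennreal (norm (toeplitz_integrand \<alpha> f z w)) \<partial>\<mu>)
      \<le> (\<integral>\<^sup>+ w. ennreal (N * exp (\<alpha> * (cmod z)\<^sup>2 / 2)) * ennreal (exp (- \<alpha> * (cmod (z - w))\<^sup>2 / 2)) \<partial>\<mu>)"
  proof (intro nn_integral_mono)
    fix w
    show "ennreal (norm (toeplitz_integrand \<alpha> f z w)) \<le> ennreal (N * exp (\<alpha> * (cmod z)\<^sup>2 / 2)) * ennreal (exp (- \<alpha> * (cmod (z - w))\<^sup>2 / 2))"
      using integrand_bound[where f=f and w=w and z=z, OF a N[of w]] N0 by (simp add: ennreal_mult[symmetric])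
  qed
  also have "\<dots> = ennreal (N * exp (\<alpha> * (cmod z)\<^sup>2 / 2)) * (\<integral>\<^sup>+ w. ennreal (exp (- \<alpha> * (cmod (z - w))\<^sup>2 / 2)) \<partial>\<mu>)"
    by (rule nn_integral_cmult) (simp add: meas_mu[OF s])
  also have "\<dots> \<le> ennreal (N * exp (\<alpha> * (cmod z)\<^sup>2 / 2)) * ennreal M"
    by (intro mult_left_mono G) simp
  also have "\<dots> = ennreal (N * exp (\<alpha> * (cmod z)\<^sup>2 / 2) * M)"
    using N0 M by (simp add: ennreal_mult[symmetric])
  finally show 1: "(\<integral>\<^sup>+ w. ennreal (norm (toeplitz_integrand \<alpha> f z w)) \<partial>\<mu>) \<le> ennreal (N * exp (\<alpha> * (cmod z)\<^sup>2 / 2) * M)" .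
  show "integrable \<mu> (toeplitz_integrand \<alpha> f z)"
    using 1 by (intro integrableI_bounded tint_meas[OF s fm]) (auto simp: top_unique less_top[symmetric] dest: order.strict_trans1 intro: le_less_trans)
qed

lemma cnj_kernel_shift:
  "cnj (fock_kernel \<alpha> z w) = cnj (fock_kernel \<alpha> z0 w) * exp (complex_of_real \<alpha> * (z - z0) * cnj w)"
proof -
  have "cnj (fock_kernel \<alpha> z w) = exp (complex_of_real \<alpha> * z * cnj w)"
    unfolding fock_kernel_def exp_cnj by simp
  also have "\<dots> = exp (complex_of_real \<alpha> * z0 * cnj w + complex_of_real \<alpha> * (z - z0) * cnj w)"
    by (simp add: algebra_simps)
  also have "\<dots> = exp (complex_of_real \<alpha> * z0 * cnj w) * exp (complex_of_real \<alpha> * (z - z0) * cnj w)"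
    by (rule exp_add)
  also have "exp (complex_of_real \<alpha> * z0 * cnj w) = cnj (fock_kernel \<alpha> z0 w)"
    unfolding fock_kernel_def exp_cnj by simp
  finally show ?thesis .
qed

lemma sq_le_exp: "(x::real) \<ge> 0 \<Longrightarrow> x\<^sup>2 \<le> 2 * exp x"
  using exp_lower_Taylor_quadratic[of x] by simp

lemma remainder_pt:
  assumes a: "\<alpha> > 0" and N: "\<And>w. norm (f w) * exp (- \<alpha> * (cmod w)\<^sup>2 / 2) \<le> N"
    and h: "cmod (z - z0) \<le> 1"
  shows "norm (toeplitz_integrand \<alpha> f z w - toeplitz_integrand \<alpha> f z0 w
           - (z - z0) * (toeplitz_integrand \<alpha> f z0 w * (complex_of_real \<alpha> * cnj w)))
         \<le> (cmod (z - z0))\<^sup>2 * (N * exp (\<alpha> * (cmod z0)\<^sup>2 / 2) * \<alpha>\<^sup>2 *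
              ((cmod w)\<^sup>2 * exp (\<alpha> * cmod w) * exp (- \<alpha> * (cmod (z0 - w))\<^sup>2 / 2)))"
proof -
  have N0: "N \<ge> 0" using N[of 0] by (smt (verit) mult_nonneg_nonneg norm_ge_zero exp_ge_zero)
  define u where "u = complex_of_real \<alpha> * (z - z0) * cnj w"
  define T0 where "T0 = toeplitz_integrand \<alpha> f z0 w"
  have Tz: "toeplitz_integrand \<alpha> f z w = T0 * exp u"
    unfolding T0_def u_def toeplitz_integrand_def cnj_kernel_shift[of \<alpha> z w z0] by (simp add: mult_ac)
  have eq: "toeplitz_integrand \<alpha> f z w - toeplitz_integrand \<alpha> f z0 w
           - (z - z0) * (toeplitz_integrand \<alpha> f z0 w * (complex_of_real \<alpha> * cnj w)) = T0 * (exp u - 1 - u)"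
    unfolding Tz T0_def[symmetric] u_def by (simp add: algebra_simps)
  have nu: "cmod u = \<alpha> * cmod (z - z0) * cmod w" using a by (simp add: u_def norm_mult)
  have T0b: "norm T0 \<le> N * exp (\<alpha> * (cmod z0)\<^sup>2 / 2) * exp (- \<alpha> * (cmod (z0 - w))\<^sup>2 / 2)"
    unfolding T0_def by (rule integrand_bound[where f=f and w=w and z=z0, OF a N[of w]])
  have eb: "norm (exp u - 1 - u) \<le> (cmod (z - z0))\<^sup>2 * (\<alpha>\<^sup>2 * ((cmod w)\<^sup>2 * exp (\<alpha> * cmod w)))"
  proof -
    have "norm (exp u - 1 - u) \<le> (cmod u)\<^sup>2 * exp (cmod u)" by (rule exp_rem)
    also have "exp (cmod u) \<le> exp (\<alpha> * cmod w)"
      unfolding nu using h a by (simp add: mult_right_le_one_le mult.assoc mult_left_le_one_le mult_le_cancel_left1 mult_left_le)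
    then have "(cmod u)\<^sup>2 * exp (cmod u) \<le> (cmod u)\<^sup>2 * exp (\<alpha> * cmod w)" by (simp add: mult_left_mono)
    also have "\<dots> = (cmod (z - z0))\<^sup>2 * (\<alpha>\<^sup>2 * ((cmod w)\<^sup>2 * exp (\<alpha> * cmod w)))"
      unfolding nu by (simp add: power_mult_distrib mult_ac)
    finally show ?thesis .
  qed
  have "norm (T0 * (exp u - 1 - u)) = norm T0 * norm (exp u - 1 - u)" by (simp add: norm_mult)
  also have "\<dots> \<le> (N * exp (\<alpha> * (cmod z0)\<^sup>2 / 2) * exp (- \<alpha> * (cmod (z0 - w))\<^sup>2 / 2)) *
       ((cmod (z - z0))\<^sup>2 * (\<alpha>\<^sup>2 * ((cmod w)\<^sup>2 * exp (\<alpha> * cmod w))))"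
    using N0 by (intro mult_mono T0b eb) auto
  also have "\<dots> = (cmod (z - z0))\<^sup>2 * (N * exp (\<alpha> * (cmod z0)\<^sup>2 / 2) * \<alpha>\<^sup>2 *
              ((cmod w)\<^sup>2 * exp (\<alpha> * cmod w) * exp (- \<alpha> * (cmod (z0 - w))\<^sup>2 / 2)))"
    by (simp add: mult_ac)
  finally show ?thesis unfolding eq .
qed

lemma ennreal_mult_le:
  "x \<le> a * b \<Longrightarrow> a \<ge> 0 \<Longrightarrow> b \<ge> 0 \<Longrightarrow> ennreal x \<le> ennreal a * ennreal b"
  by (subst ennreal_mult[symmetric]) (auto intro: ennreal_leI)

lemma norm_tri_w: "cmod w \<le> cmod z0 + cmod (w - z0)"
  using norm_triangle_ineq[of z0 "w - z0"] by simp

lemma normw_le: "cmod w \<le> exp (cmod z0) * exp (1 * cmod (w - z0))"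
proof -
  have "cmod w \<le> exp (cmod w)" using exp_ge_add_one_self[of "cmod w"] by linarith
  also have "\<dots> \<le> exp (cmod z0 + cmod (w - z0))" using norm_tri_w[of w z0] by simp
  finally show ?thesis by (simp add: exp_add)
qed

lemma sqexp_le:
  assumes "\<alpha> \<ge> 0"
  shows "(cmod w)\<^sup>2 * exp (\<alpha> * cmod w) \<le> 2 * exp ((\<alpha> + 1) * cmod z0) * exp ((\<alpha> + 1) * cmod (w - z0))"
proof -
  have "(cmod w)\<^sup>2 * exp (\<alpha> * cmod w) \<le> (2 * exp (cmod w)) * exp (\<alpha> * cmod w)"
    by (intro mult_right_mono sq_le_exp) auto
  also have "\<dots> = 2 * exp ((\<alpha> + 1) * cmod w)" by (simp add: exp_add[symmetric] algebra_simps)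
  also have "\<dots> \<le> 2 * exp ((\<alpha> + 1) * (cmod z0 + cmod (w - z0)))"
    using norm_tri_w[of w z0] assms by (simp add: mult_left_mono)
  also have "\<dots> = 2 * exp ((\<alpha> + 1) * cmod z0) * exp ((\<alpha> + 1) * cmod (w - z0))"
    by (simp add: exp_add[symmetric] algebra_simps)
  finally show ?thesis .
qed

lemma toeplitz_holo:
  fixes \<mu> :: "complex measure"
  assumes a: "\<alpha> > 0" and s: "sets \<mu> = sets borel" and fc: "continuous_on UNIV f"
    and N: "\<And>w. norm (f w) * exp (- \<alpha> * (cmod w)\<^sup>2 / 2) \<le> N"
    and G: "\<And>p. (\<integral>\<^sup>+ w. ennreal (exp (- \<alpha> * (cmod (p - w))\<^sup>2 / 2)) \<partial>\<mu>) \<le> ennreal M" and M: "M \<ge> 0"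
  shows "toeplitz \<alpha> \<mu> f holomorphic_on UNIV"
proof -
  have fm: "f \<in> borel_measurable borel" by (rule borel_measurable_continuous_onI[OF fc])
  have N0: "N \<ge> 0" using N[of 0] by (smt (verit) mult_nonneg_nonneg norm_ge_zero exp_ge_zero)
  have intT: "integrable \<mu> (toeplitz_integrand \<alpha> f z)" for z
    by (rule tint_int(2)[OF a s fm N G M])
  have "(toeplitz \<alpha> \<mu> f has_field_derivative
          (\<integral> w. toeplitz_integrand \<alpha> f z0 w * (complex_of_real \<alpha> * cnj w) \<partial>\<mu>)) (at z0)" for z0
  proof -
    define T where "T z w = toeplitz_integrand \<alpha> f z w" for z w
    define D where "D w = T z0 w * (complex_of_real \<alpha> * cnj w)" for w
    define C0 where "C0 = N * exp (\<alpha> * (cmod z0)\<^sup>2 / 2)"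
    have C0: "C0 \<ge> 0" using N0 by (simp add: C0_def)
    define E where "E w = exp (- \<alpha> * (cmod (z0 - w))\<^sup>2 / 2)" for w
    have Tb: "norm (T z0 w) \<le> C0 * E w" for w
      unfolding T_def C0_def E_def by (rule integrand_bound[where f=f and w=w and z=z0, OF a N[of w]])
    have [measurable]: "T z0 \<in> borel_measurable \<mu>" unfolding T_def by (rule tint_meas[OF s fm])
    have "(\<lambda>w. complex_of_real \<alpha> * cnj w) \<in> borel_measurable borel"
      by (intro borel_measurable_continuous_onI continuous_intros)
    then have [measurable]: "(\<lambda>w. complex_of_real \<alpha> * cnj w) \<in> borel_measurable \<mu>"
      by (simp add: meas_mu[OF s])
    have Dm: "D \<in> borel_measurable \<mu>" unfolding D_def by measurable
    have mE1: "(\<lambda>w. ennreal (exp (1 * cmod (w - z0)) * E w)) \<in> borel_measurable \<mu>"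
      unfolding meas_mu[OF s] E_def by measurable
    have mE2: "(\<lambda>w. ennreal (exp ((\<alpha> + 1) * cmod (w - z0)) * E w)) \<in> borel_measurable \<mu>"
      unfolding meas_mu[OF s] E_def by measurable
    have L1a: "(\<integral>\<^sup>+ w. ennreal (exp (1 * cmod (w - z0)) * E w) \<partial>\<mu>) \<le> ennreal (exp (2 * 1\<^sup>2 / \<alpha>) * (4 * M))"
      unfolding E_def by (rule L1[OF a _ s M G]) simp
    have L1b: "(\<integral>\<^sup>+ w. ennreal (exp ((\<alpha> + 1) * cmod (w - z0)) * E w) \<partial>\<mu>) \<le> ennreal (exp (2 * (\<alpha> + 1)\<^sup>2 / \<alpha>) * (4 * M))"
      unfolding E_def by (rule L1[OF a _ s M G]) (use a in simp)
    have "(\<integral>\<^sup>+ w. ennreal (norm (D w)) \<partial>\<mu>) \<le> (\<integral>\<^sup>+ w. ennreal (C0 * \<alpha> * exp (cmod z0)) * ennreal (exp (1 * cmod (w - z0)) * E w) \<partial>\<mu>)"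
    proof (intro nn_integral_mono)
      fix w
      have "norm (D w) = norm (T z0 w) * (\<alpha> * cmod w)" using a by (simp add: D_def norm_mult)
      also have "\<dots> \<le> (C0 * E w) * (\<alpha> * (exp (cmod z0) * exp (1 * cmod (w - z0))))"
        using a C0 by (intro mult_mono Tb mult_left_mono normw_le) (auto simp: E_def)
      also have "\<dots> = (C0 * \<alpha> * exp (cmod z0)) * (exp (1 * cmod (w - z0)) * E w)" by (simp add: mult_ac)
      finally show "ennreal (norm (D w)) \<le> ennreal (C0 * \<alpha> * exp (cmod z0)) * ennreal (exp (1 * cmod (w - z0)) * E w)"
        by (rule ennreal_mult_le) (use C0 a in \<open>auto simp: E_def\<close>)
    qed
    also have "\<dots> = ennreal (C0 * \<alpha> * exp (cmod z0)) * (\<integral>\<^sup>+ w. ennreal (exp (1 * cmod (w - z0)) * E w) \<partial>\<mu>)"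
      by (rule nn_integral_cmult[OF mE1])
    also have "\<dots> < \<infinity>"
    proof -
      have "(\<integral>\<^sup>+ w. ennreal (exp (1 * cmod (w - z0)) * E w) \<partial>\<mu>) < \<infinity>"
        using L1a by (rule le_less_trans) simp
      then show ?thesis by (simp add: ennreal_mult_less_top)
    qed
    finally have intD: "integrable \<mu> D" by (intro integrableI_bounded Dm)
    define QB where "QB = C0 * \<alpha>\<^sup>2 * (2 * exp ((\<alpha> + 1) * cmod z0)) * (exp (2 * (\<alpha> + 1)\<^sup>2 / \<alpha>) * (4 * M))"
    have QB: "QB \<ge> 0" using C0 M by (simp add: QB_def)
    define Kw where "Kw w = C0 * \<alpha>\<^sup>2 * ((cmod w)\<^sup>2 * exp (\<alpha> * cmod w) * E w)" for w
    have Kw0: "Kw w \<ge> 0" for w using C0 by (simp add: Kw_def E_def)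
    have Kint: "(\<integral>\<^sup>+ w. ennreal (Kw w) \<partial>\<mu>) \<le> ennreal QB"
    proof -
      have "(\<integral>\<^sup>+ w. ennreal (Kw w) \<partial>\<mu>) \<le> (\<integral>\<^sup>+ w. ennreal (C0 * \<alpha>\<^sup>2 * (2 * exp ((\<alpha> + 1) * cmod z0))) * ennreal (exp ((\<alpha> + 1) * cmod (w - z0)) * E w) \<partial>\<mu>)"
      proof (intro nn_integral_mono)
        fix w
        have "Kw w \<le> C0 * \<alpha>\<^sup>2 * ((2 * exp ((\<alpha> + 1) * cmod z0) * exp ((\<alpha> + 1) * cmod (w - z0))) * E w)"
          unfolding Kw_def using C0 a sqexp_le[of \<alpha> w z0]
          by (intro mult_left_mono mult_right_mono) (auto simp: E_def)
        also have "\<dots> = (C0 * \<alpha>\<^sup>2 * (2 * exp ((\<alpha> + 1) * cmod z0))) * (exp ((\<alpha> + 1) * cmod (w - z0)) * E w)"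
          by (simp add: mult_ac)
        finally show "ennreal (Kw w) \<le> ennreal (C0 * \<alpha>\<^sup>2 * (2 * exp ((\<alpha> + 1) * cmod z0))) * ennreal (exp ((\<alpha> + 1) * cmod (w - z0)) * E w)"
          by (rule ennreal_mult_le) (use C0 a in \<open>auto simp: E_def\<close>)
      qed
      also have "\<dots> = ennreal (C0 * \<alpha>\<^sup>2 * (2 * exp ((\<alpha> + 1) * cmod z0))) * (\<integral>\<^sup>+ w. ennreal (exp ((\<alpha> + 1) * cmod (w - z0)) * E w) \<partial>\<mu>)"
        by (rule nn_integral_cmult[OF mE2])
      also have "\<dots> \<le> ennreal (C0 * \<alpha>\<^sup>2 * (2 * exp ((\<alpha> + 1) * cmod z0))) * ennreal (exp (2 * (\<alpha> + 1)\<^sup>2 / \<alpha>) * (4 * M))"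
        by (intro mult_left_mono L1b) simp
      also have "\<dots> = ennreal QB" using C0 M by (simp add: QB_def ennreal_mult[symmetric] mult_ac)
      finally show ?thesis .
    qed
    have bound: "norm (toeplitz \<alpha> \<mu> f z - toeplitz \<alpha> \<mu> f z0 - (z - z0) * integral\<^sup>L \<mu> D) \<le> QB * (cmod (z - z0))\<^sup>2"
      if h: "cmod (z - z0) \<le> 1" for z
    proof -
      have "toeplitz \<alpha> \<mu> f z - toeplitz \<alpha> \<mu> f z0 - (z - z0) * integral\<^sup>L \<mu> D
          = (\<integral> w. T z w - T z0 w - (z - z0) * D w \<partial>\<mu>)"
        using intT intD unfolding toeplitz_def T_def by simp
      also have "norm \<dots> \<le> (\<integral>\<^sup>+ w. ennreal (norm (T z w - T z0 w - (z - z0) * D w)) \<partial>\<mu>)"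
        using intT intD unfolding T_def by (intro integral_norm_bound_ennreal) auto
      also have "\<dots> \<le> (\<integral>\<^sup>+ w. ennreal ((cmod (z - z0))\<^sup>2) * ennreal (Kw w) \<partial>\<mu>)"
      proof (intro nn_integral_mono)
        fix w
        have "norm (T z w - T z0 w - (z - z0) * D w) \<le> (cmod (z - z0))\<^sup>2 * Kw w"
          unfolding T_def D_def Kw_def C0_def E_def by (rule remainder_pt[OF a N h])
        then show "ennreal (norm (T z w - T z0 w - (z - z0) * D w)) \<le> ennreal ((cmod (z - z0))\<^sup>2) * ennreal (Kw w)"
          by (rule ennreal_mult_le) (use Kw0 in auto)
      qed
      also have "\<dots> = ennreal ((cmod (z - z0))\<^sup>2) * (\<integral>\<^sup>+ w. ennreal (Kw w) \<partial>\<mu>)"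
        by (rule nn_integral_cmult) (simp add: meas_mu[OF s] Kw_def E_def)
      also have "\<dots> \<le> ennreal ((cmod (z - z0))\<^sup>2) * ennreal QB"
        by (intro mult_left_mono Kint) simp
      also have "\<dots> = ennreal (QB * (cmod (z - z0))\<^sup>2)" using QB by (simp add: ennreal_mult[symmetric] mult_ac)
      finally show ?thesis using QB by (simp add: ennreal_le_iff)
    qed
    show ?thesis unfolding D_def[symmetric] T_def[symmetric]
      by (rule deriv_from_bound) (rule bound)
  qed
  then show ?thesis unfolding holomorphic_on_def field_differentiable_def
    by (meson has_field_derivative_at_within)
qed

lemma real_gauss:
  assumes c: "c > 0"
  shows "(\<integral>\<^sup>+ t. ennreal (exp (- c * t\<^sup>2)) \<partial>lborel) = ennreal (sqrt (pi / c))"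
proof -
  define \<sigma> where "\<sigma> = sqrt (1 / (2 * c))"
  have s2: "\<sigma>\<^sup>2 = 1 / (2 * c)" using c by (simp add: \<sigma>_def)
  have nd: "exp (- c * t\<^sup>2) = sqrt (pi / c) * normal_density 0 \<sigma> t" for t
  proof -
    have "2 * pi * \<sigma>\<^sup>2 = pi / c" using c by (simp add: s2)
    moreover have "- (t - 0)\<^sup>2 / (2 * \<sigma>\<^sup>2) = - c * t\<^sup>2" using c by (simp add: s2)
    ultimately show ?thesis using c by (simp add: normal_density_def)
  qed
  have "(\<integral>\<^sup>+ t. ennreal (exp (- c * t\<^sup>2)) \<partial>lborel) = (\<integral>\<^sup>+ t. ennreal (sqrt (pi / c)) * ennreal (normal_density 0 \<sigma> t) \<partial>lborel)"
    unfolding nd using c by (intro nn_integral_cong) (simp add: ennreal_mult)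
  also have "\<dots> = ennreal (sqrt (pi / c)) * (\<integral>\<^sup>+ t. ennreal (normal_density 0 \<sigma> t) \<partial>lborel)"
    by (rule nn_integral_cmult) simp
  also have "(\<integral>\<^sup>+ t. ennreal (normal_density 0 \<sigma> t) \<partial>lborel) = 1"
  proof -
    have sp: "\<sigma> > 0" using c by (simp add: \<sigma>_def)
    show ?thesis by (subst nn_integral_eq_integral) (use integrable_normal_density[OF sp] integral_normal_density[OF sp] in auto)
  qed
  finally show ?thesis by simp
qed

lemma complex_gauss:
  assumes c: "c > 0"
  shows "(\<integral>\<^sup>+ a. ennreal (exp (- c * (cmod a)\<^sup>2)) \<partial>(lborel :: complex measure)) = ennreal (pi / c)"
proof -
  have pr: "ennreal (exp (- c * (cmod a)\<^sup>2)) = (\<Prod>b\<in>Basis. (\<lambda>t. ennreal (exp (- c * t\<^sup>2))) (a \<bullet> b))" for a :: complex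
  proof -
    have "exp (- c * (cmod a)\<^sup>2) = exp (- c * (Re a)\<^sup>2) * exp (- c * (Im a)\<^sup>2)"
      unfolding cmod_power2 by (simp add: algebra_simps flip: exp_add)
    then show ?thesis by (simp add: Basis_complex_def inner_complex_def ennreal_mult)
  qed
  have "(\<integral>\<^sup>+ a. ennreal (exp (- c * (cmod a)\<^sup>2)) \<partial>(lborel :: complex measure))
       = (\<integral>\<^sup>+ a. (\<Prod>b\<in>(Basis::complex set). (\<lambda>t. ennreal (exp (- c * t\<^sup>2))) (a \<bullet> b)) \<partial>lborel)"
    unfolding pr ..
  also have "\<dots> = (\<Prod>b\<in>(Basis::complex set). (\<integral>\<^sup>+ t. ennreal (exp (- c * t\<^sup>2)) \<partial>lborel))"
    by (rule nn_integral_lborel_prod) auto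
  also have "\<dots> = ennreal (sqrt (pi / c)) * ennreal (sqrt (pi / c))"
  proof -
    have rg: "(\<integral>\<^sup>+ t. ennreal (exp (- (c * t\<^sup>2))) \<partial>lborel) = ennreal (sqrt (pi / c))"
      using real_gauss[OF c] by simp
    show ?thesis by (simp add: Basis_complex_def rg)
  qed
  also have "\<dots> = ennreal (pi / c)"
    using c by (simp add: ennreal_mult[symmetric])
  finally show ?thesis .
qed

lemma complex_gauss_shift:
  assumes c: "c > 0"
  shows "(\<integral>\<^sup>+ a. ennreal (exp (- c * (cmod (a - m))\<^sup>2)) \<partial>(lborel :: complex measure)) = ennreal (pi / c)"
proof -
  have d: "distr lborel borel (\<lambda>x. m + x) = (lborel :: complex measure)"
    using lborel_affine[of 1 m] by (simp add: density_1)
  have "(\<integral>\<^sup>+ a. ennreal (exp (- c * (cmod (a - m))\<^sup>2)) \<partial>(lborel :: complex measure))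
      = (\<integral>\<^sup>+ a. ennreal (exp (- c * (cmod (a - m))\<^sup>2)) \<partial>distr lborel borel (\<lambda>x. m + x))"
    by (simp only: d)
  also have "\<dots> = (\<integral>\<^sup>+ x. ennreal (exp (- c * (cmod ((m + x) - m))\<^sup>2)) \<partial>lborel)"
    by (rule nn_integral_distr) auto
  also have "\<dots> = ennreal (pi / c)" using complex_gauss[OF c] by simp
  finally show ?thesis .
qed

lemma condM_sigma:
  fixes \<mu> :: "complex measure"
  assumes a: "\<alpha> > 0" and s: "sets \<mu> = sets borel" and cm: "condition_M \<alpha> \<mu>"
  shows "sigma_finite_measure \<mu>"
proof
  have I0: "(\<integral>\<^sup>+ w. ennreal (exp (- \<alpha> * (cmod w)\<^sup>2)) \<partial>\<mu>) < \<infinity>"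
    using cm unfolding condition_M_def by (auto simp: fock_kernel_def elim: allE[of _ 0])
  have sp: "space \<mu> = UNIV" using sets_eq_imp_space_eq[OF s] by simp
  define A where "A = range (\<lambda>n::nat. cball (0::complex) (real n))"
  have fin: "emeasure \<mu> (cball 0 (real n)) \<noteq> \<infinity>" for n
  proof -
    have "emeasure \<mu> (cball 0 (real n)) = (\<integral>\<^sup>+ w. indicator (cball 0 (real n)) w \<partial>\<mu>)"
      using s by (simp add: nn_integral_indicator)
    also have "\<dots> \<le> (\<integral>\<^sup>+ w. ennreal (exp (\<alpha> * (real n)\<^sup>2)) * ennreal (exp (- \<alpha> * (cmod w)\<^sup>2)) \<partial>\<mu>)"
    proof (intro nn_integral_mono)
      fix w
      show "indicator (cball 0 (real n)) w \<le> ennreal (exp (\<alpha> * (real n)\<^sup>2)) * ennreal (exp (- \<alpha> * (cmod w)\<^sup>2))"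
      proof (cases "w \<in> cball 0 (real n)")
        case True
        then have "cmod w \<le> real n" by simp
        then have "(cmod w)\<^sup>2 \<le> (real n)\<^sup>2" by (simp add: power_mono)
        then have "0 \<le> \<alpha> * (real n)\<^sup>2 + - \<alpha> * (cmod w)\<^sup>2" using a
          by (simp add: algebra_simps mult_left_mono)
        then have "1 \<le> exp (\<alpha> * (real n)\<^sup>2) * exp (- \<alpha> * (cmod w)\<^sup>2)"
          by (simp flip: exp_add)
        then show ?thesis using True by (simp add: ennreal_mult[symmetric])
      qed simp
    qed
    also have "\<dots> = ennreal (exp (\<alpha> * (real n)\<^sup>2)) * (\<integral>\<^sup>+ w. ennreal (exp (- \<alpha> * (cmod w)\<^sup>2)) \<partial>\<mu>)"
      by (rule nn_integral_cmult) (simp add: meas_mu[OF s])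
    also have "\<dots> < \<infinity>" using I0 by (simp add: ennreal_mult_less_top)
    finally show ?thesis by simp
  qed
  show "\<exists>A::complex set set. countable A \<and> A \<subseteq> sets \<mu> \<and> \<Union> A = space \<mu> \<and> (\<forall>a\<in>A. emeasure \<mu> a \<noteq> \<infinity>)"
  proof (intro exI[of _ A] conjI)
    show "countable A" unfolding A_def by (rule countable_image[OF countableI_type])
    show "A \<subseteq> sets \<mu>" unfolding A_def s by (auto intro!: borel_closed)
    show "\<Union> A = space \<mu>" unfolding A_def sp
    proof (intro set_eqI iffI)
      fix x :: complex
      obtain n :: nat where "cmod x \<le> real n" using real_arch_simple by blast
      then show "x \<in> \<Union> (range (\<lambda>n::nat. cball 0 (real n)))" by auto
    qed auto
    show "\<forall>a\<in>A. emeasure \<mu> a \<noteq> \<infinity>" unfolding A_def using fin by auto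
  qed
qed

lemma fock_bdd:
  "f \<in> fock_inf \<alpha> \<Longrightarrow> bdd_above (range (\<lambda>z. norm (f z) * exp (- \<alpha> * (norm z)\<^sup>2 / 2)))"
  unfolding fock_inf_def by (auto intro: bdd_aboveI2)

lemma fock_le_norm:
  "f \<in> fock_inf \<alpha> \<Longrightarrow> norm (f z) * exp (- \<alpha> * (norm z)\<^sup>2 / 2) \<le> fock_inf_norm \<alpha> f"
  unfolding fock_inf_norm_def by (rule cSUP_upper[OF _ fock_bdd]) auto

lemma fock_norm_le:
  "(\<And>z. norm (f z) * exp (- \<alpha> * (norm z)\<^sup>2 / 2) \<le> B) \<Longrightarrow> fock_inf_norm \<alpha> f \<le> B"
  unfolding fock_inf_norm_def by (rule cSUP_least) auto

lemma fock_norm_nonneg: "f \<in> fock_inf \<alpha> \<Longrightarrow> 0 \<le> fock_inf_norm \<alpha> f"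
  using fock_le_norm[of f \<alpha> 0] by (smt (verit) mult_nonneg_nonneg norm_ge_zero exp_ge_zero)

definition kk :: "real \<Rightarrow> complex \<Rightarrow> complex \<Rightarrow> complex" where
  "kk \<alpha> a w = fock_kernel \<alpha> a w * complex_of_real (exp (- \<alpha> * (cmod a)\<^sup>2 / 2))"

lemma kk_bound: "norm (kk \<alpha> a w) * exp (- \<alpha> * (cmod w)\<^sup>2 / 2) = exp (- \<alpha> * (cmod (a - w))\<^sup>2 / 2)"
proof -
  have "norm (kk \<alpha> a w) * exp (- \<alpha> * (cmod w)\<^sup>2 / 2)
      = exp (\<alpha> * (Re a * Re w + Im a * Im w) + - \<alpha> * (cmod a)\<^sup>2 / 2 + - \<alpha> * (cmod w)\<^sup>2 / 2)"
    unfolding kk_def norm_mult norm_kernel exp_add by simp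
  also have "\<alpha> * (Re a * Re w + Im a * Im w) + - \<alpha> * (cmod a)\<^sup>2 / 2 + - \<alpha> * (cmod w)\<^sup>2 / 2
      = - \<alpha> * (cmod (a - w))\<^sup>2 / 2"
    unfolding cmod_diff_sq by (simp add: field_simps)
  finally show ?thesis .
qed

lemma kk_fock: assumes "\<alpha> \<ge> 0" shows "kk \<alpha> a \<in> fock_inf \<alpha>"
  unfolding fock_inf_def mem_Collect_eq
proof
  show "kk \<alpha> a holomorphic_on UNIV"
    unfolding kk_def fock_kernel_def by (intro holomorphic_intros)
  show "\<exists>M. \<forall>z. norm (kk \<alpha> a z) * exp (- \<alpha> * (norm z)\<^sup>2 / 2) \<le> M"
    by (intro exI[of _ 1] allI) (use kk_bound[of \<alpha> a] assms in simp)
qed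

lemma kk_norm: assumes "\<alpha> \<ge> 0" shows "fock_inf_norm \<alpha> (kk \<alpha> a) \<le> 1"
  by (rule fock_norm_le) (use kk_bound[of \<alpha> a] assms in simp)

lemma kk_integrand:
  "toeplitz_integrand \<alpha> (kk \<alpha> a) a w =
     complex_of_real (exp (\<alpha> * (cmod a)\<^sup>2 / 2) * exp (- \<alpha> * (cmod (a - w))\<^sup>2))"
proof -
  have "toeplitz_integrand \<alpha> (kk \<alpha> a) a w =
      (fock_kernel \<alpha> a w * cnj (fock_kernel \<alpha> a w)) * complex_of_real (exp (- \<alpha> * (cmod a)\<^sup>2 / 2) * exp (- \<alpha> * (cmod w)\<^sup>2))"
    unfolding toeplitz_integrand_def kk_def by (simp add: mult_ac)
  also have "fock_kernel \<alpha> a w * cnj (fock_kernel \<alpha> a w) = complex_of_real ((exp (\<alpha> * (Re a * Re w + Im a * Im w)))\<^sup>2)"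
    unfolding complex_norm_square[symmetric] norm_kernel ..
  also have "complex_of_real ((exp (\<alpha> * (Re a * Re w + Im a * Im w)))\<^sup>2) * complex_of_real (exp (- \<alpha> * (cmod a)\<^sup>2 / 2) * exp (- \<alpha> * (cmod w)\<^sup>2))
      = complex_of_real (exp (2 * (\<alpha> * (Re a * Re w + Im a * Im w)) + - \<alpha> * (cmod a)\<^sup>2 / 2 + - \<alpha> * (cmod w)\<^sup>2))"
    unfolding mult_2 exp_add power2_eq_square of_real_mult by (simp only: mult_ac)
  also have "2 * (\<alpha> * (Re a * Re w + Im a * Im w)) + - \<alpha> * (cmod a)\<^sup>2 / 2 + - \<alpha> * (cmod w)\<^sup>2
      = \<alpha> * (cmod a)\<^sup>2 / 2 + - \<alpha> * (cmod (a - w))\<^sup>2"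
    unfolding cmod_diff_sq by (simp add: field_simps)
  finally show ?thesis by (simp only: exp_add)
qed

lemma h_bound:
  fixes \<mu> :: "complex measure"
  assumes a: "\<alpha> > 0" and TB: "toeplitz_bounded_fock_inf \<alpha> \<mu>"
  shows "\<exists>K\<ge>0. \<forall>p. (\<integral>\<^sup>+ w. ennreal (exp (- \<alpha> * (cmod (p - w))\<^sup>2)) \<partial>\<mu>) \<le> ennreal K"
proof -
  obtain C where C: "\<And>f. f \<in> fock_inf \<alpha> \<Longrightarrow> (\<forall>z. integrable \<mu> (toeplitz_integrand \<alpha> f z)) \<and>
        toeplitz \<alpha> \<mu> f \<in> fock_inf \<alpha> \<and> fock_inf_norm \<alpha> (toeplitz \<alpha> \<mu> f) \<le> C * fock_inf_norm \<alpha> f"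
    using TB unfolding toeplitz_bounded_fock_inf_def by blast
  have "(\<integral>\<^sup>+ w. ennreal (exp (- \<alpha> * (cmod (p - w))\<^sup>2)) \<partial>\<mu>) \<le> ennreal \<bar>C\<bar>" for p
  proof -
    define c where "c = exp (\<alpha> * (cmod p)\<^sup>2 / 2)"
    define \<phi> where "\<phi> w = exp (- \<alpha> * (cmod (p - w))\<^sup>2)" for w
    have c0: "c > 0" by (simp add: c_def)
    from C[OF kk_fock[of \<alpha> p, OF less_imp_le[OF a]]] have int: "integrable \<mu> (toeplitz_integrand \<alpha> (kk \<alpha> p) p)"
      and Tf: "toeplitz \<alpha> \<mu> (kk \<alpha> p) \<in> fock_inf \<alpha>"
      and nb: "fock_inf_norm \<alpha> (toeplitz \<alpha> \<mu> (kk \<alpha> p)) \<le> C * fock_inf_norm \<alpha> (kk \<alpha> p)" by auto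
    have ieq: "toeplitz_integrand \<alpha> (kk \<alpha> p) p = (\<lambda>w. complex_of_real (c * \<phi> w))"
      by (simp add: fun_eq_iff kk_integrand c_def \<phi>_def)
    have "integrable \<mu> (\<lambda>w. c * \<phi> w)" using int unfolding ieq complex_of_real_integrable_eq .
    then have intp: "integrable \<mu> \<phi>" using c0 by simp
    have Tp: "toeplitz \<alpha> \<mu> (kk \<alpha> p) p = complex_of_real (c * integral\<^sup>L \<mu> \<phi>)"
      unfolding toeplitz_def ieq by simp
    have ip0: "integral\<^sup>L \<mu> \<phi> \<ge> 0" by (rule integral_nonneg_AE) (simp add: \<phi>_def)
    have "norm (toeplitz \<alpha> \<mu> (kk \<alpha> p) p) * exp (- \<alpha> * (norm p)\<^sup>2 / 2) \<le> fock_inf_norm \<alpha> (toeplitz \<alpha> \<mu> (kk \<alpha> p))"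
      by (rule fock_le_norm[OF Tf])
    also have "\<dots> \<le> C * fock_inf_norm \<alpha> (kk \<alpha> p)" by (fact nb)
    also have "\<dots> \<le> \<bar>C\<bar> * fock_inf_norm \<alpha> (kk \<alpha> p)"
      using fock_norm_nonneg[OF kk_fock[of \<alpha> p, OF less_imp_le[OF a]]] by (intro mult_right_mono) auto
    also have "\<dots> \<le> \<bar>C\<bar>" using kk_norm[of \<alpha> p, OF less_imp_le[OF a]] by (simp add: mult_left_le)
    finally have le: "norm (toeplitz \<alpha> \<mu> (kk \<alpha> p) p) * exp (- \<alpha> * (norm p)\<^sup>2 / 2) \<le> \<bar>C\<bar>" .
    have "norm (toeplitz \<alpha> \<mu> (kk \<alpha> p) p) * exp (- \<alpha> * (norm p)\<^sup>2 / 2) = integral\<^sup>L \<mu> \<phi>"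
    proof -
      have "norm (toeplitz \<alpha> \<mu> (kk \<alpha> p) p) = c * integral\<^sup>L \<mu> \<phi>" using Tp c0 ip0 by (simp add: norm_mult)
      moreover have "c * exp (- \<alpha> * (norm p)\<^sup>2 / 2) = 1" by (simp add: c_def flip: exp_add)
      ultimately show ?thesis by (metis mult.commute mult.left_commute mult_1_right)
    qed
    with le have "integral\<^sup>L \<mu> \<phi> \<le> \<bar>C\<bar>" by simp
    moreover have "(\<integral>\<^sup>+ w. ennreal (\<phi> w) \<partial>\<mu>) = ennreal (integral\<^sup>L \<mu> \<phi>)"
      by (rule nn_integral_eq_integral[OF intp]) (simp add: \<phi>_def)
    ultimately show ?thesis unfolding \<phi>_def by (simp add: ennreal_leI)
  qed
  then show ?thesis by (intro exI[of _ "\<bar>C\<bar>"]) auto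
qed

lemma gauss_conv_id:
  fixes a z w :: complex
  shows "exp (- \<alpha> * (cmod (a - w))\<^sup>2) * exp (- \<alpha> * (cmod (z - a))\<^sup>2) =
         exp (- \<alpha> * (cmod (z - w))\<^sup>2 / 2) * exp (- (2 * \<alpha>) * (cmod (a - (z + w) / 2))\<^sup>2)"
proof -
  have "- \<alpha> * (cmod (a - w))\<^sup>2 + - \<alpha> * (cmod (z - a))\<^sup>2 =
        - \<alpha> * (cmod (z - w))\<^sup>2 / 2 + - (2 * \<alpha>) * (cmod (a - (z + w) / 2))\<^sup>2"
    unfolding cmod_power2 by (simp add: power2_eq_square field_simps)
  then show ?thesis by (simp flip: exp_add)
qed

lemma meas_pair:
  assumes s: "sets \<mu> = sets borel"
  shows "measurable (lborel \<Otimes>\<^sub>M \<mu>) N = measurable (borel \<Otimes>\<^sub>M borel) N"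
  by (rule measurable_cong_sets[OF sets_pair_measure_cong[OF sets_lborel s] refl])

lemma g_bound:
  fixes \<mu> :: "complex measure"
  assumes a: "\<alpha> > 0" and s: "sets \<mu> = sets borel" and sf: "sigma_finite_measure \<mu>" and K: "K \<ge> 0"
    and H: "\<And>p. (\<integral>\<^sup>+ w. ennreal (exp (- \<alpha> * (cmod (p - w))\<^sup>2)) \<partial>\<mu>) \<le> ennreal K"
  shows "(\<integral>\<^sup>+ w. ennreal (exp (- \<alpha> * (cmod (z - w))\<^sup>2 / 2)) \<partial>\<mu>) \<le> ennreal (2 * K)"
proof -
  interpret P: pair_sigma_finite lborel \<mu>
    unfolding pair_sigma_finite_def using sf lborel.sigma_finite_measure_axioms by simp
  define F where "F a w = ennreal (exp (- \<alpha> * (cmod (a - w))\<^sup>2) * exp (- \<alpha> * (cmod (z - a))\<^sup>2))" for a w :: complex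
  have Fm: "case_prod F \<in> borel_measurable (lborel \<Otimes>\<^sub>M \<mu>)"
    unfolding meas_pair[OF s] F_def by measurable
  have a2: "2 * \<alpha> > 0" using a by simp
  have inner1: "(\<integral>\<^sup>+ a. F a w \<partial>lborel) = ennreal (exp (- \<alpha> * (cmod (z - w))\<^sup>2 / 2)) * ennreal (pi / (2 * \<alpha>))" for w
  proof -
    have "(\<integral>\<^sup>+ a. F a w \<partial>lborel) = (\<integral>\<^sup>+ a. ennreal (exp (- \<alpha> * (cmod (z - w))\<^sup>2 / 2)) * ennreal (exp (- (2 * \<alpha>) * (cmod (a - (z + w) / 2))\<^sup>2)) \<partial>lborel)"
      unfolding F_def gauss_conv_id by (simp add: ennreal_mult)
    also have "\<dots> = ennreal (exp (- \<alpha> * (cmod (z - w))\<^sup>2 / 2)) * (\<integral>\<^sup>+ a. ennreal (exp (- (2 * \<alpha>) * (cmod (a - (z + w) / 2))\<^sup>2)) \<partial>lborel)"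
      by (rule nn_integral_cmult) simp
    also have "\<dots> = ennreal (exp (- \<alpha> * (cmod (z - w))\<^sup>2 / 2)) * ennreal (pi / (2 * \<alpha>))"
      by (simp only: complex_gauss_shift[OF a2])
    finally show ?thesis .
  qed
  have inner2: "(\<integral>\<^sup>+ w. F a w \<partial>\<mu>) \<le> ennreal (exp (- \<alpha> * (cmod (a - z))\<^sup>2)) * ennreal K" for a
  proof -
    have "(\<integral>\<^sup>+ w. F a w \<partial>\<mu>) = (\<integral>\<^sup>+ w. ennreal (exp (- \<alpha> * (cmod (a - z))\<^sup>2)) * ennreal (exp (- \<alpha> * (cmod (a - w))\<^sup>2)) \<partial>\<mu>)"
      unfolding F_def by (simp add: ennreal_mult norm_minus_commute mult.commute)
    also have "\<dots> = ennreal (exp (- \<alpha> * (cmod (a - z))\<^sup>2)) * (\<integral>\<^sup>+ w. ennreal (exp (- \<alpha> * (cmod (a - w))\<^sup>2)) \<partial>\<mu>)"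
      by (rule nn_integral_cmult) (simp add: meas_mu[OF s])
    also have "\<dots> \<le> ennreal (exp (- \<alpha> * (cmod (a - z))\<^sup>2)) * ennreal K"
      by (intro mult_left_mono H) simp
    finally show ?thesis .
  qed
  have "ennreal (pi / (2 * \<alpha>)) * (\<integral>\<^sup>+ w. ennreal (exp (- \<alpha> * (cmod (z - w))\<^sup>2 / 2)) \<partial>\<mu>)
      = (\<integral>\<^sup>+ w. ennreal (exp (- \<alpha> * (cmod (z - w))\<^sup>2 / 2)) * ennreal (pi / (2 * \<alpha>)) \<partial>\<mu>)"
    by (subst nn_integral_cmult[symmetric]) (simp_all add: meas_mu[OF s] mult.commute)
  also have "\<dots> = (\<integral>\<^sup>+ w. (\<integral>\<^sup>+ a. F a w \<partial>lborel) \<partial>\<mu>)"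
    by (simp only: inner1)
  also have "\<dots> = (\<integral>\<^sup>+ a. (\<integral>\<^sup>+ w. F a w \<partial>\<mu>) \<partial>lborel)"
    by (rule P.Fubini'[OF Fm])
  also have "\<dots> \<le> (\<integral>\<^sup>+ a. ennreal (exp (- \<alpha> * (cmod (a - z))\<^sup>2)) * ennreal K \<partial>lborel)"
    by (intro nn_integral_mono inner2)
  also have "\<dots> = (\<integral>\<^sup>+ a. ennreal (exp (- \<alpha> * (cmod (a - z))\<^sup>2)) \<partial>lborel) * ennreal K"
    by (rule nn_integral_multc) simp
  also have "\<dots> = ennreal (pi / \<alpha>) * ennreal K"
    by (simp only: complex_gauss_shift[OF a])
  also have "\<dots> = ennreal (2 * K * (pi / (2 * \<alpha>)))"
    using a K by (simp add: ennreal_mult[symmetric] field_simps)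
  finally have "ennreal (pi / (2 * \<alpha>)) * (\<integral>\<^sup>+ w. ennreal (exp (- \<alpha> * (cmod (z - w))\<^sup>2 / 2)) \<partial>\<mu>) \<le> ennreal (2 * K * (pi / (2 * \<alpha>)))" .
  then have "(\<integral>\<^sup>+ w. ennreal (exp (- \<alpha> * (cmod (z - w))\<^sup>2 / 2)) \<partial>\<mu>) \<le> ennreal (2 * K * (pi / (2 * \<alpha>)) / (pi / (2 * \<alpha>)))"
    by (subst (asm) ennreal_scale_le) (use a K in auto)
  then show ?thesis using a by (simp add: mult.commute)
qed

lemma mu_tilde_meas:
  fixes \<mu> :: "complex measure"
  assumes s: "sets \<mu> = sets borel" and sf: "sigma_finite_measure \<mu>"
  shows "mu_tilde \<alpha> 1 \<mu> \<in> borel_measurable lebesgue"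
proof -
  interpret sigma_finite_measure \<mu> by (fact sf)
  have "case_prod (\<lambda>z w. ennreal (exp (- \<alpha> * 1 * (cmod (z - w))\<^sup>2 / 2))) \<in> borel_measurable (lborel \<Otimes>\<^sub>M \<mu>)"
    unfolding meas_pair[OF s] by measurable
  then have "(\<lambda>z. \<integral>\<^sup>+ w. ennreal (exp (- \<alpha> * 1 * (cmod (z - w))\<^sup>2 / 2)) \<partial>\<mu>) \<in> borel_measurable lborel"
    by (rule borel_measurable_nn_integral)
  then have "mu_tilde \<alpha> 1 \<mu> \<in> borel_measurable lborel"
    unfolding mu_tilde_def[abs_def] by measurable
  then show ?thesis by (rule measurable_completion)
qed

theorem theorem4p1:
  fixes \<alpha> :: real and \<mu> :: "complex measure"
  assumes "\<alpha> > 0"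
    and "sets \<mu> = sets borel"
    and "condition_M \<alpha> \<mu>"
  shows "toeplitz_bounded_fock_inf \<alpha> \<mu> \<longleftrightarrow> in_Linf_dA (mu_tilde \<alpha> 1 \<mu>)"
proof
  note a = assms(1) and s = assms(2) and cm = assms(3)
  have sf: "sigma_finite_measure \<mu>" by (rule condM_sigma[OF a s cm])
  assume TB: "toeplitz_bounded_fock_inf \<alpha> \<mu>"
  obtain K where K: "K \<ge> 0" and HK: "\<And>p. (\<integral>\<^sup>+ w. ennreal (exp (- \<alpha> * (cmod (p - w))\<^sup>2)) \<partial>\<mu>) \<le> ennreal K"
    using h_bound[OF a TB] by blast
  have gb: "(\<integral>\<^sup>+ w. ennreal (exp (- \<alpha> * (cmod (z - w))\<^sup>2 / 2)) \<partial>\<mu>) \<le> ennreal (2 * K)" for z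
    by (rule g_bound[OF a s sf K HK])
  have "mu_tilde \<alpha> 1 \<mu> z \<le> ennreal (\<alpha> / pi * (2 * K))" for z
  proof -
    have "mu_tilde \<alpha> 1 \<mu> z = ennreal (\<alpha> / pi) * (\<integral>\<^sup>+ w. ennreal (exp (- \<alpha> * (cmod (z - w))\<^sup>2 / 2)) \<partial>\<mu>)"
      unfolding mu_tilde_def by simp
    also have "\<dots> \<le> ennreal (\<alpha> / pi) * ennreal (2 * K)" by (intro mult_left_mono gb) simp
    also have "\<dots> = ennreal (\<alpha> / pi * (2 * K))" using a K by (simp add: ennreal_mult[symmetric])
    finally show ?thesis .
  qed
  then show "in_Linf_dA (mu_tilde \<alpha> 1 \<mu>)"
    unfolding in_Linf_dA_def using mu_tilde_meas[OF s sf] by (auto intro!: exI[of _ "\<alpha> / pi * (2 * K)"])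
next
  note a = assms(1) and s = assms(2)
  assume L: "in_Linf_dA (mu_tilde \<alpha> 1 \<mu>)"
  obtain M where M: "M \<ge> 0" and G: "\<And>z. (\<integral>\<^sup>+ w. ennreal (exp (- \<alpha> * (cmod (z - w))\<^sup>2 / 2)) \<partial>\<mu>) \<le> ennreal M"
    using linf_everywhere[OF a s L] by blast
  show "toeplitz_bounded_fock_inf \<alpha> \<mu>"
    unfolding toeplitz_bounded_fock_inf_def
  proof (intro exI[of _ M] ballI conjI allI)
    fix f assume f: "f \<in> fock_inf \<alpha>"
    have fc: "continuous_on UNIV f"
      using f unfolding fock_inf_def by (auto intro: holomorphic_on_imp_continuous_on)
    have fm: "f \<in> borel_measurable borel" by (rule borel_measurable_continuous_onI[OF fc])
    define N where "N = fock_inf_norm \<alpha> f"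
    have Nb: "norm (f w) * exp (- \<alpha> * (cmod w)\<^sup>2 / 2) \<le> N" for w
      unfolding N_def by (rule fock_le_norm[OF f])
    have N0: "N \<ge> 0" unfolding N_def by (rule fock_norm_nonneg[OF f])
    show "integrable \<mu> (toeplitz_integrand \<alpha> f z)" for z
      by (rule tint_int(2)[OF a s fm Nb G M])
    have bd: "norm (toeplitz \<alpha> \<mu> f z) * exp (- \<alpha> * (norm z)\<^sup>2 / 2) \<le> N * M" for z
    proof -
      have "ennreal (norm (toeplitz \<alpha> \<mu> f z)) \<le> (\<integral>\<^sup>+ w. ennreal (norm (toeplitz_integrand \<alpha> f z w)) \<partial>\<mu>)"
        unfolding toeplitz_def by (rule integral_norm_bound_ennreal[OF tint_int(2)[OF a s fm Nb G M]])
      also have "\<dots> \<le> ennreal (N * exp (\<alpha> * (cmod z)\<^sup>2 / 2) * M)"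
        by (rule tint_int(1)[OF a s fm Nb G M])
      finally have "norm (toeplitz \<alpha> \<mu> f z) \<le> N * exp (\<alpha> * (cmod z)\<^sup>2 / 2) * M"
        using N0 M by (simp add: ennreal_le_iff)
      then have "norm (toeplitz \<alpha> \<mu> f z) * exp (- \<alpha> * (norm z)\<^sup>2 / 2)
          \<le> N * exp (\<alpha> * (cmod z)\<^sup>2 / 2) * M * exp (- \<alpha> * (norm z)\<^sup>2 / 2)"
        by (rule mult_right_mono) simp
      also have "\<dots> = N * M * (exp (\<alpha> * (cmod z)\<^sup>2 / 2) * exp (- \<alpha> * (norm z)\<^sup>2 / 2))"
        by (simp only: mult_ac)
      also have "exp (\<alpha> * (cmod z)\<^sup>2 / 2) * exp (- \<alpha> * (norm z)\<^sup>2 / 2) = 1"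
        by (simp flip: exp_add)
      finally show ?thesis by simp
    qed
    show "toeplitz \<alpha> \<mu> f \<in> fock_inf \<alpha>"
      unfolding fock_inf_def mem_Collect_eq
      using toeplitz_holo[OF a s fc Nb G M] bd by blast
    show "fock_inf_norm \<alpha> (toeplitz \<alpha> \<mu> f) \<le> M * fock_inf_norm \<alpha> f"
      using fock_norm_le[of "toeplitz \<alpha> \<mu> f" \<alpha> "N * M", OF bd] unfolding N_def by (simp add: mult.commute)
  qed
qed

end
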